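(* Let $N_A\ge 1$ be an integer, let $d_1,\dots,d_{N_A}\in\mathbb{R}$, and let $G_N$ be a finite set with $|G_N|$ elements. Consider the optimization problem: minimize $d\in\mathbb{R}$ subject to $$d-\sum_{i\in G_N} x_{ik}\ \ge\ d_k\quad \forall k=1,\dots,N_A,\qquad \sum_{k=1}^{N_A}x_{ik}=1\quad\forall i\in G_N,\qquad x_{ik}\in\{0,1\}.$$ Let $d_{\bar k}=\max_{k=1,\dots,N_A} d_k$ and $\Delta N=\sum_{i=1}^{N_A}\lfloor d_{\bar k}-d_i\rfloor$. Then the optimal value $d^*$ equals $$d^*=\begin{cases} d_{\bar k}, & \text{if } |G_N|\le \Delta N,\\[4pt] \displaystyle\min_{j=1,\dots,N_A}\left\{ d_j+\left\lceil \frac{|G_N|+\sum_{k=1}^{N_A}\lceil d_k-d_j\rceil}{N_A}\right\rceil\right\}, & \text{otherwise.}\end{cases}$$ *)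

theory Defs
  imports Main Complex_Main
begin

definition feasible_values :: "nat \<Rightarrow> (nat \<Rightarrow> real) \<Rightarrow> 'a set \<Rightarrow> real set" where
  "feasible_values NA d G =
     {D. \<exists>x :: 'a \<Rightarrow> nat \<Rightarrow> real.
          (\<forall>i\<in>G. \<forall>k\<in>{1..NA}. x i k \<in> {0, 1}) \<and>
          (\<forall>i\<in>G. (\<Sum>k=1..NA. x i k) = 1) \<and>
          (\<forall>k\<in>{1..NA}. D - (\<Sum>i\<in>G. x i k) \<ge> d k)}"

definition is_optimal_value :: "nat \<Rightarrow> (nat \<Rightarrow> real) \<Rightarrow> 'a set \<Rightarrow> real \<Rightarrow> bool" where
  "is_optimal_value NA d G v \<longleftrightarrow>
     v \<in> feasible_values NA d G \<and> (\<forall>D\<in>feasible_values NA d G. v \<le> D)"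

end

theory Submission
  imports Defs
begin

lemma assign_exists:
  fixes c :: "nat \<Rightarrow> nat" and G :: "'a set"
  assumes "finite G" "card G \<le> (\<Sum>k=1..NA. c k)"
  shows "\<exists>x :: 'a \<Rightarrow> nat \<Rightarrow> real.
          (\<forall>i\<in>G. \<forall>k\<in>{1..NA}. x i k \<in> {0, 1}) \<and>
          (\<forall>i\<in>G. (\<Sum>k=1..NA. x i k) = 1) \<and>
          (\<forall>k\<in>{1..NA}. (\<Sum>i\<in>G. x i k) \<le> real (c k))"
  using assms
proof (induction G arbitrary: c rule: finite_induct)
  case empty
  then show ?case by auto
next
  case (insert a G)
  have "\<exists>k\<in>{1..NA}. c k \<noteq> 0"
  proof (rule ccontr)
    assume "\<not> ?thesis"
    then have "(\<Sum>k=1..NA. c k) = 0" by simp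
    then show False using insert.prems insert.hyps by simp
  qed
  then obtain k0 where k0: "k0 \<in> {1..NA}" "c k0 \<noteq> 0" by blast
  define c' where "c' = c(k0 := c k0 - 1)"
  have "(\<Sum>k=1..NA. c k) = c k0 + (\<Sum>k\<in>{1..NA}-{k0}. c k)"
    using k0 by (simp add: sum.remove)
  moreover have "(\<Sum>k=1..NA. c' k) = c' k0 + (\<Sum>k\<in>{1..NA}-{k0}. c' k)"
    using k0 by (simp add: sum.remove)
  moreover have "(\<Sum>k\<in>{1..NA}-{k0}. c' k) = (\<Sum>k\<in>{1..NA}-{k0}. c k)"
    unfolding c'_def by (rule sum.cong) auto
  ultimately have "card G \<le> (\<Sum>k=1..NA. c' k)"
    using insert k0 by (simp add: c'_def)
  then obtain x where x: "\<forall>i\<in>G. \<forall>k\<in>{1..NA}. x i k \<in> {0, 1}"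
    "\<forall>i\<in>G. (\<Sum>k=1..NA. x i k) = 1"
    "\<forall>k\<in>{1..NA}. (\<Sum>i\<in>G. x i k) \<le> real (c' k)"
    using insert.IH by blast
  define y where "y = (\<lambda>i k. if i = a then (if k = k0 then 1 else 0) else x i k :: real)"
  have sG: "(\<Sum>i\<in>G. y i k) = (\<Sum>i\<in>G. x i k)" for k
    unfolding y_def using insert(2) by (intro sum.cong) auto
  have "\<forall>i\<in>insert a G. \<forall>k\<in>{1..NA}. y i k \<in> {0, 1}"
    using x(1) by (auto simp: y_def)
  moreover have "\<forall>i\<in>insert a G. (\<Sum>k=1..NA. y i k) = 1"
  proof
    fix i assume i: "i \<in> insert a G"
    show "(\<Sum>k=1..NA. y i k) = 1"
    proof (cases "i = a")
      case True
      then show ?thesis using k0 by (simp add: y_def sum.delta)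
    next
      case False
      then show ?thesis using i x(2) by (simp add: y_def)
    qed
  qed
  moreover have "\<forall>k\<in>{1..NA}. (\<Sum>i\<in>insert a G. y i k) \<le> real (c k)"
  proof
    fix k assume k: "k \<in> {1..NA}"
    have "(\<Sum>i\<in>insert a G. y i k) = y a k + (\<Sum>i\<in>G. x i k)"
      using insert(1,2) sG by simp
    show "(\<Sum>i\<in>insert a G. y i k) \<le> real (c k)"
    proof (cases "k = k0")
      case True
      have "(\<Sum>i\<in>G. x i k) \<le> real (c' k)" using x(3) k by blast
      moreover have "real (c' k) = real (c k) - 1" using True k0 by (simp add: c'_def of_nat_diff)
      moreover have "y a k = 1" using True by (simp add: y_def)
      ultimately show ?thesis using \<open>(\<Sum>i\<in>insert a G. y i k) = y a k + (\<Sum>i\<in>G. x i k)\<close> by linarith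
    next
      case False
      have "(\<Sum>i\<in>G. x i k) \<le> real (c' k)" using x(3) k by blast
      moreover have "c' k = c k" using False by (simp add: c'_def)
      moreover have "y a k = 0" using False by (simp add: y_def)
      ultimately show ?thesis using \<open>(\<Sum>i\<in>insert a G. y i k) = y a k + (\<Sum>i\<in>G. x i k)\<close> by linarith
    qed
  qed
  ultimately show ?case by blast
qed

lemma feas_iff:
  fixes G :: "'a set"
  assumes "finite G"
  shows "D \<in> feasible_values NA d G \<longleftrightarrow>
    (\<forall>k\<in>{1..NA}. d k \<le> D) \<and> int (card G) \<le> (\<Sum>k=1..NA. \<lfloor>D - d k\<rfloor>)"
proof
  assume "D \<in> feasible_values NA d G"
  then obtain x :: "'a \<Rightarrow> nat \<Rightarrow> real" where x: "\<forall>i\<in>G. \<forall>k\<in>{1..NA}. x i k \<in> {0, 1}"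
    "\<forall>i\<in>G. (\<Sum>k=1..NA. x i k) = 1"
    "\<forall>k\<in>{1..NA}. D - (\<Sum>i\<in>G. x i k) \<ge> d k"
    unfolding feasible_values_def by blast
  have nn: "(\<Sum>i\<in>G. x i k) \<ge> 0" if "k \<in> {1..NA}" for k
  proof -
    have "\<forall>i\<in>G. 0 \<le> x i k" using x(1) that by fastforce
    then show ?thesis by (intro sum_nonneg) auto
  qed
  have ints: "(\<Sum>i\<in>G. x i k) \<in> \<int>" if "k \<in> {1..NA}" for k
  proof -
    have "\<forall>i\<in>G. x i k \<in> \<int>" using x(1) that by fastforce
    then show ?thesis by (intro Ints_sum) auto
  qed
  have fl: "(\<Sum>i\<in>G. x i k) \<le> of_int \<lfloor>D - d k\<rfloor>" if k: "k \<in> {1..NA}" for k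
  proof -
    obtain m where m: "(\<Sum>i\<in>G. x i k) = of_int m" using ints[OF k] Ints_cases by blast
    have "d k \<le> D - (\<Sum>i\<in>G. x i k)" using x(3) k by blast
    then have "of_int m \<le> D - d k" using m by linarith
    then have "m \<le> \<lfloor>D - d k\<rfloor>" by (simp add: le_floor_iff)
    then show ?thesis using m by simp
  qed
  have "(\<Sum>k=1..NA. \<Sum>i\<in>G. x i k) = (\<Sum>i\<in>G. \<Sum>k=1..NA. x i k)" by (rule sum.swap)
  also have "\<dots> = real (card G)" using x(2) by simp
  finally have "real (card G) \<le> (\<Sum>k=1..NA. real_of_int \<lfloor>D - d k\<rfloor>)"
    using fl by (metis sum_mono)
  then have "int (card G) \<le> (\<Sum>k=1..NA. \<lfloor>D - d k\<rfloor>)"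
    by (metis of_int_le_iff of_int_of_nat_eq of_int_sum)
  moreover have "\<forall>k\<in>{1..NA}. d k \<le> D" using x(3) nn by force
  ultimately show "(\<forall>k\<in>{1..NA}. d k \<le> D) \<and> int (card G) \<le> (\<Sum>k=1..NA. \<lfloor>D - d k\<rfloor>)"
    by blast
next
  assume a: "(\<forall>k\<in>{1..NA}. d k \<le> D) \<and> int (card G) \<le> (\<Sum>k=1..NA. \<lfloor>D - d k\<rfloor>)"
  define c where "c k = nat \<lfloor>D - d k\<rfloor>" for k
  have ck: "int (c k) = \<lfloor>D - d k\<rfloor>" if "k \<in> {1..NA}" for k
    using a that by (simp add: c_def)
  have "int (\<Sum>k=1..NA. c k) = (\<Sum>k=1..NA. \<lfloor>D - d k\<rfloor>)"
    using ck by simp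
  then have "card G \<le> (\<Sum>k=1..NA. c k)" using a by linarith
  then obtain x :: "'a \<Rightarrow> nat \<Rightarrow> real" where x: "\<forall>i\<in>G. \<forall>k\<in>{1..NA}. x i k \<in> {0, 1}"
    "\<forall>i\<in>G. (\<Sum>k=1..NA. x i k) = 1"
    "\<forall>k\<in>{1..NA}. (\<Sum>i\<in>G. x i k) \<le> real (c k)"
    using assign_exists[OF assms] by blast
  have "\<forall>k\<in>{1..NA}. D - (\<Sum>i\<in>G. x i k) \<ge> d k"
  proof
    fix k assume k: "k \<in> {1..NA}"
    have "real (c k) = of_int \<lfloor>D - d k\<rfloor>" using ck[OF k] by (metis of_int_of_nat_eq)
    also have "\<dots> \<le> D - d k" by simp
    finally have "real (c k) \<le> D - d k" .
    moreover have "(\<Sum>i\<in>G. x i k) \<le> real (c k)" using x(3) k by blast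
    ultimately show "D - (\<Sum>i\<in>G. x i k) \<ge> d k" by linarith
  qed
  then show "D \<in> feasible_values NA d G"
    unfolding feasible_values_def using x(1,2) by blast
qed

lemma g_shift:
  fixes d :: "nat \<Rightarrow> real"
  shows "(\<Sum>k=1..NA. \<lfloor>d j + of_int m - d k\<rfloor>) = int NA * m - (\<Sum>k=1..NA. \<lceil>d k - d j\<rceil>)"
proof -
  have "\<lfloor>d j + of_int m - d k\<rfloor> = m - \<lceil>d k - d j\<rceil>" for k
  proof -
    have "\<lfloor>d j + of_int m - d k\<rfloor> = \<lfloor>(- (d k - d j)) + of_int m\<rfloor>" by (simp add: algebra_simps)
    also have "\<dots> = \<lfloor>- (d k - d j)\<rfloor> + m" by (rule floor_add_int[symmetric])
    moreover have "\<lfloor>- (d k - d j)\<rfloor> = - \<lceil>d k - d j\<rceil>" by (rule floor_minus)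
    ultimately show ?thesis by simp
  qed
  then show ?thesis by (simp add: sum_subtractf)
qed

theorem lemma2:
  fixes NA :: nat and d :: "nat \<Rightarrow> real" and G :: "'a set"
  assumes "NA \<ge> 1" and "finite G"
  defines "dbar \<equiv> Max (d ` {1..NA})"
  defines "DeltaN \<equiv> (\<Sum>i=1..NA. \<lfloor>dbar - d i\<rfloor>)"
  shows "is_optimal_value NA d G
           (if int (card G) \<le> DeltaN then dbar
            else Min ((\<lambda>j. d j + of_int \<lceil>(real (card G) + of_int (\<Sum>k=1..NA. \<lceil>d k - d j\<rceil>)) / real NA\<rceil>)
                      ` {1..NA}))"
proof -
  let ?N = "int (card G)"
  let ?g = "\<lambda>D. (\<Sum>k=1..NA. \<lfloor>D - d k\<rfloor>)"
  let ?S = "\<lambda>j. (\<Sum>k=1..NA. \<lceil>d k - d j\<rceil>)"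
  let ?f = "\<lambda>j. d j + of_int \<lceil>(real (card G) + of_int (?S j)) / real NA\<rceil>"
  have ne: "{1..NA} \<noteq> {}" using assms(1) by auto
  have fin: "finite {1..NA}" by simp
  have dle: "d k \<le> dbar" if "k \<in> {1..NA}" for k
    unfolding dbar_def using that by (intro Max_ge) auto
  have "dbar \<in> d ` {1..NA}" unfolding dbar_def using ne by (intro Max_in) auto
  then obtain kb where kb: "kb \<in> {1..NA}" "d kb = dbar" by (metis imageE)
  have geD: "dbar \<le> D" if "D \<in> feasible_values NA d G" for D
    using that feas_iff[OF assms(2)] kb by metis
  have NApos: "real NA > 0" using assms(1) by simp
  show ?thesis
  proof (cases "?N \<le> DeltaN")
    case True
    have "dbar \<in> feasible_values NA d G"
      using feas_iff[OF assms(2)] dle True unfolding DeltaN_def by blast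
    then show ?thesis using True geD unfolding is_optimal_value_def by auto
  next
    case False
    have gmono: "?g D \<le> DeltaN" if "D \<le> dbar" for D
      unfolding DeltaN_def using that by (intro sum_mono floor_mono) auto
    have ffeas: "?f j \<in> feasible_values NA d G" for j
    proof -
      define m where "m = \<lceil>(real (card G) + of_int (?S j)) / real NA\<rceil>"
      have "(real (card G) + of_int (?S j)) / real NA \<le> of_int m" unfolding m_def by simp
      then have "real (card G) + of_int (?S j) \<le> real NA * of_int m"
        using NApos by (simp add: divide_le_eq mult.commute)
      then have "real (card G) + of_int (?S j) \<le> of_int (int NA * m)" by simp
      then have "?N + ?S j \<le> int NA * m" by linarith
      then have gf: "?N \<le> ?g (?f j)" using g_shift[of d j m NA] unfolding m_def by simp
      have "\<not> ?f j < dbar"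
      proof
        assume "?f j < dbar"
        then have "?g (?f j) \<le> DeltaN" using gmono by simp
        then show False using gf False by linarith
      qed
      then show ?thesis using feas_iff[OF assms(2)] gf dle by force
    qed
    let ?v = "Min (?f ` {1..NA})"
    have vin: "?v \<in> ?f ` {1..NA}" using ne by (intro Min_in) auto
    have "?v \<le> D" if D: "D \<in> feasible_values NA d G" for D
    proof -
      have Dd: "\<forall>k\<in>{1..NA}. d k \<le> D" and gD: "?N \<le> ?g D"
        using D feas_iff[OF assms(2)] by auto
      let ?h = "\<lambda>k. d k + of_int \<lfloor>D - d k\<rfloor>"
      have "Max (?h ` {1..NA}) \<in> ?h ` {1..NA}" using ne by (intro Max_in) auto
      then obtain j where j0: "Max (?h ` {1..NA}) = ?h j" "j \<in> {1..NA}" by (rule imageE)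
      have j: "j \<in> {1..NA}" using j0(2) .
      have hle: "?h k \<le> ?h j" if "k \<in> {1..NA}" for k
      proof -
        have "?h k \<le> Max (?h ` {1..NA})" using that by (intro Max_ge) auto
        then show ?thesis using j0(1) by simp
      qed
      define m where "m = \<lfloor>D - d j\<rfloor>"
      have "of_int \<lfloor>D - d j\<rfloor> \<le> D - d j" by (rule of_int_floor_le)
      then have EleD: "?h j \<le> D" by linarith
      have "?g D \<le> ?g (?h j)"
      proof (intro sum_mono)
        fix k assume k: "k \<in> {1..NA}"
        have "\<lfloor>D - d k\<rfloor> = \<lfloor>?h k - d k\<rfloor>" by simp
        also have "\<dots> \<le> \<lfloor>?h j - d k\<rfloor>" using hle[OF k] by (intro floor_mono) simp
        finally show "\<lfloor>D - d k\<rfloor> \<le> \<lfloor>?h j - d k\<rfloor>" .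
      qed
      then have "?N \<le> int NA * m - ?S j" using gD g_shift[of d j m NA] unfolding m_def by simp
      then have "real (card G) + of_int (?S j) \<le> of_int (int NA * m)" by linarith
      then have "real (card G) + of_int (?S j) \<le> real NA * of_int m" by simp
      then have "(real (card G) + of_int (?S j)) / real NA \<le> of_int m"
        using NApos by (simp add: divide_le_eq mult.commute)
      then have "\<lceil>(real (card G) + of_int (?S j)) / real NA\<rceil> \<le> m" by (simp add: ceiling_le_iff)
      then have "?f j \<le> ?h j" unfolding m_def by simp
      also have "\<dots> \<le> D" by (rule EleD)
      finally have "?f j \<le> D" .
      moreover have "?v \<le> ?f j" using j(1) by (intro Min_le) auto
      ultimately show ?thesis by linarith
    qed
    moreover have "?v \<in> feasible_values NA d G" using vin ffeas by auto
    ultimately show ?thesis using False unfolding is_optimal_value_def by auto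
  qed
qed

end
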